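(* Let $n\ge2$, let $X\subset\mathbb{R}^n$ be finite, let $\epsilon>0$ and $A\subset X$. If $r\in\mathbb{N}\cup\{0\}$, then $(\bar A)^r=\operatorname{int}(A)\cup(\partial A)^r$.
   Context: $\mathcal{Q}=\mathcal{Q}(\epsilon)$ is the collection of closed cubes $\{x\in\mathbb{R}^n: j_i\frac{\epsilon}{2\sqrt n}\le x_i\le (j_i+1)\frac{\epsilon}{2\sqrt n},\ i=1,\dots,n\}$, $j\in\mathbb{Z}^n$. For a cube $S\in\mathcal{Q}$ and integer $m\ge0$, $S^m=\{x\in\mathbb{R}^n:\max_i|x_i-s_i|\le m\frac{\epsilon}{2\sqrt n}\text{ for some }s\in S\}$. For $B\subset\mathbb{R}^n$, $\mathcal{I}(B)=\{S\in\mathcal{Q}: S\cap B\ne\emptyset\}$. A cube $S\in\mathcal{I}(A)$ is an interior cube of $A$ if $S^1\cap X\subset A$ and every cube $T\in\mathcal{Q}$ with $T\subset S^1$ lies in $\mathcal{I}(A)$; otherwise $S\in\mathcal{I}(A)$ is a boundary cube of $A$. $\operatorname{int}(A)$ is the union of the interior cubes of $A$, $\partial A$ is the union of the boundary cubes of $A$, and $\bar A=\operatorname{int}(A)\cup\partial A=\bigcup_{S\in\mathcal{I}(A)}S$. For $Y\subset\mathbb{R}^n$ and integer $N\ge0$, the $N$-extension is $Y^N=\bigcup_{S\in\mathcal{I}(Y)}S^N$. *)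

theory Defs
  imports "HOL-Analysis.Analysis"
begin

text \<open>Points of R^n are modelled as real^'n with n = CARD('n).
  Side length of the grid cubes: eps / (2 sqrt n).\<close>

definition grid_side :: "real \<Rightarrow> 'n::finite itself \<Rightarrow> real" where
  "grid_side eps _ = eps / (2 * sqrt (real CARD('n)))"

definition grid_cube :: "real \<Rightarrow> int^'n::finite \<Rightarrow> (real^'n) set" where
  "grid_cube eps j = {x. \<forall>i. real_of_int (j$i) * grid_side eps TYPE('n) \<le> x$i \<and>
                              x$i \<le> (real_of_int (j$i) + 1) * grid_side eps TYPE('n)}"

definition grid_cubes :: "real \<Rightarrow> (real^'n::finite) set set" where
  "grid_cubes eps = range (grid_cube eps)"

definition cube_ext :: "real \<Rightarrow> nat \<Rightarrow> (real^'n::finite) set \<Rightarrow> (real^'n) set" where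
  "cube_ext eps m S = {x. \<exists>s\<in>S. \<forall>i. \<bar>x$i - s$i\<bar> \<le> real m * grid_side eps TYPE('n)}"

definition meeting_cubes :: "real \<Rightarrow> (real^'n::finite) set \<Rightarrow> (real^'n) set set" where
  "meeting_cubes eps B = {S \<in> grid_cubes eps. S \<inter> B \<noteq> {}}"

definition interior_cube :: "real \<Rightarrow> (real^'n::finite) set \<Rightarrow> (real^'n) set \<Rightarrow> (real^'n) set \<Rightarrow> bool" where
  "interior_cube eps X A S \<longleftrightarrow> S \<in> meeting_cubes eps A \<and>
      cube_ext eps 1 S \<inter> X \<subseteq> A \<and>
      (\<forall>T \<in> grid_cubes eps. T \<subseteq> cube_ext eps 1 S \<longrightarrow> T \<in> meeting_cubes eps A)"

definition boundary_cube :: "real \<Rightarrow> (real^'n::finite) set \<Rightarrow> (real^'n) set \<Rightarrow> (real^'n) set \<Rightarrow> bool" where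
  "boundary_cube eps X A S \<longleftrightarrow> S \<in> meeting_cubes eps A \<and> \<not> interior_cube eps X A S"

definition dint :: "real \<Rightarrow> (real^'n::finite) set \<Rightarrow> (real^'n) set \<Rightarrow> (real^'n) set" where
  "dint eps X A = \<Union>{S. interior_cube eps X A S}"

definition dbdry :: "real \<Rightarrow> (real^'n::finite) set \<Rightarrow> (real^'n) set \<Rightarrow> (real^'n) set" where
  "dbdry eps X A = \<Union>{S. boundary_cube eps X A S}"

definition dclos :: "real \<Rightarrow> (real^'n::finite) set \<Rightarrow> (real^'n) set" where
  "dclos eps A = \<Union>(meeting_cubes eps A)"

definition next_ext :: "real \<Rightarrow> nat \<Rightarrow> (real^'n::finite) set \<Rightarrow> (real^'n) set" where
  "next_ext eps N Y = (\<Union>S\<in>meeting_cubes eps Y. cube_ext eps N S)"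

end

theory Submission
  imports Defs
begin

lemma gs_pos: "eps > 0 \<Longrightarrow> grid_side eps TYPE('n::finite) > 0"
  unfolding grid_side_def by simp

lemma cube_nonempty: "eps > 0 \<Longrightarrow> grid_cube eps (j::int^'n::finite) \<noteq> {}"
proof -
  assume e: "eps > 0"
  let ?s = "grid_side eps TYPE('n)"
  have "(\<chi> i. real_of_int (j$i) * ?s) \<in> grid_cube eps j"
    using gs_pos[OF e, where 'n='n] unfolding grid_cube_def by auto
  thus ?thesis by blast
qed

lemma self_ext: "eps > 0 \<Longrightarrow> S \<subseteq> cube_ext eps m (S::(real^'n::finite) set)"
proof
  fix x assume e: "eps > 0" and x: "x \<in> S"
  have "0 \<le> real m * grid_side eps TYPE('n)" using gs_pos[OF e, where 'n='n] by simp
  thus "x \<in> cube_ext eps m S" unfolding cube_ext_def using x by force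
qed

lemma cube_sub_ext:
  fixes j c :: "int^'n::finite"
  assumes e: "eps > 0" and d: "\<forall>i. \<bar>j$i - c$i\<bar> \<le> int m"
  shows "grid_cube eps j \<subseteq> cube_ext eps m (grid_cube eps c)"
proof
  fix x assume x: "x \<in> grid_cube eps j"
  let ?s = "grid_side eps TYPE('n)"
  have s: "?s > 0" using gs_pos[OF e] .
  define p where "p = (\<chi> i. max (real_of_int (c$i) * ?s) (min (x$i) ((real_of_int (c$i) + 1) * ?s)))"
  have "p \<in> grid_cube eps c"
    unfolding grid_cube_def p_def using s by (auto simp: algebra_simps)
  moreover have "\<bar>x$i - p$i\<bar> \<le> real m * ?s" for i
  proof -
    have xi: "real_of_int (j$i) * ?s \<le> x$i" "x$i \<le> (real_of_int (j$i) + 1) * ?s"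
      using x unfolding grid_cube_def by auto
    have di: "real_of_int (j$i) - real_of_int (c$i) \<le> real m" "real_of_int (c$i) - real_of_int (j$i) \<le> real m"
      using d[rule_format, of i] by linarith+
    have a: "(real_of_int (j$i) - real_of_int (c$i)) * ?s \<le> real m * ?s"
      using di(1) s by (simp add: mult_right_mono)
    have b: "(real_of_int (c$i) - real_of_int (j$i)) * ?s \<le> real m * ?s"
      using di(2) s by (simp add: mult_right_mono)
    show ?thesis unfolding p_def using xi a b s
      by (auto simp: algebra_simps abs_if max_def min_def)
  qed
  ultimately show "x \<in> cube_ext eps m (grid_cube eps c)"
    unfolding cube_ext_def by blast
qed

lemma adj:
  fixes j c :: "int^'n::finite"
  assumes e: "eps > 0" and "grid_cube eps j \<inter> grid_cube eps c \<noteq> {}"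
  shows "grid_cube eps j \<subseteq> cube_ext eps 1 (grid_cube eps c)"
proof -
  let ?s = "grid_side eps TYPE('n)"
  have s: "?s > 0" using gs_pos[OF e] .
  obtain y where y: "y \<in> grid_cube eps j" "y \<in> grid_cube eps c" using assms(2) by blast
  have "\<bar>j$i - c$i\<bar> \<le> int 1" for i
  proof -
    have "real_of_int (j$i) * ?s < (real_of_int (c$i) + 2) * ?s"
      "real_of_int (c$i) * ?s < (real_of_int (j$i) + 2) * ?s"
      using y s unfolding grid_cube_def by (auto simp: algebra_simps; smt (verit) spec)+
    hence "real_of_int (j$i) < real_of_int (c$i) + 2" "real_of_int (c$i) < real_of_int (j$i) + 2"
      using s by (simp_all add: mult_less_cancel_right)
    thus ?thesis by linarith
  qed
  thus ?thesis using cube_sub_ext[OF e] by blast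
qed

lemma ext_cube_index:
  fixes j :: "int^'n::finite"
  assumes e: "eps > 0" and x: "x \<in> cube_ext eps r (grid_cube eps j)"
  shows "\<exists>k. x \<in> grid_cube eps k \<and> (\<forall>i. \<bar>k$i - j$i\<bar> \<le> int r)"
proof -
  let ?s = "grid_side eps TYPE('n)"
  have s: "?s > 0" using gs_pos[OF e] .
  obtain p where p: "p \<in> grid_cube eps j" "\<forall>i. \<bar>x$i - p$i\<bar> \<le> real r * ?s"
    using x unfolding cube_ext_def by blast
  define k where "k = (\<chi> i. max (j$i - int r) (min (j$i + int r) \<lfloor>x$i / ?s\<rfloor>))"
  have "real_of_int (k$i) * ?s \<le> x$i \<and> x$i \<le> (real_of_int (k$i) + 1) * ?s" for i
  proof -
    define t where "t = x$i / ?s"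
    have xt: "x$i = t * ?s" unfolding t_def using s by simp
    have pi: "real_of_int (j$i) * ?s \<le> p$i" "p$i \<le> (real_of_int (j$i) + 1) * ?s"
      using p(1) unfolding grid_cube_def by auto
    have "(real_of_int (j$i) - real r) * ?s \<le> t * ?s" "t * ?s \<le> (real_of_int (j$i) + 1 + real r) * ?s"
      using pi p(2)[rule_format, of i] xt by (auto simp: algebra_simps abs_le_iff)
    hence t1: "real_of_int (j$i) - real r \<le> t" and t2: "t \<le> real_of_int (j$i) + 1 + real r"
      using s by (simp_all add: mult_le_cancel_right)
    have f: "real_of_int \<lfloor>t\<rfloor> \<le> t" "t < real_of_int \<lfloor>t\<rfloor> + 1" by linarith+
    have kk: "k$i = max (j$i - int r) (min (j$i + int r) \<lfloor>t\<rfloor>)" unfolding k_def t_def by simp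
    have "real_of_int (k$i) \<le> t \<and> t \<le> real_of_int (k$i) + 1"
    proof (cases "\<lfloor>t\<rfloor> < j$i - int r")
      case True
      hence "real_of_int \<lfloor>t\<rfloor> + 1 \<le> real_of_int (j$i) - real r" by linarith
      then show ?thesis using True f t1 kk by simp
    next
      case False
      show ?thesis
      proof (cases "\<lfloor>t\<rfloor> > j$i + int r")
        case True
        hence "real_of_int \<lfloor>t\<rfloor> \<ge> real_of_int (j$i) + real r + 1" by linarith
        moreover have "real_of_int (k$i) = real_of_int (j$i) + real r" using True kk by simp
        ultimately show ?thesis using f t2 by linarith
      next
        case False2: False
        then show ?thesis using False f kk by simp
      qed
    qed
    then show ?thesis using xt s by (simp add: mult_right_mono)
  qed
  hence "x \<in> grid_cube eps k" unfolding grid_cube_def by blast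
  moreover have "\<forall>i. \<bar>k$i - j$i\<bar> \<le> int r" unfolding k_def by auto
  ultimately show ?thesis by blast
qed

lemma walk:
  fixes c k :: "int^'n::finite"
  assumes e: "eps > 0"
  shows "interior_cube eps X A (grid_cube eps c) \<Longrightarrow> x \<in> grid_cube eps k \<Longrightarrow>
    \<forall>i. \<bar>k$i - c$i\<bar> \<le> int d \<Longrightarrow> d \<le> r \<Longrightarrow>
    x \<in> dint eps X A \<union> next_ext eps r (dbdry eps X A)"
proof (induction d arbitrary: c)
  case 0
  hence "c = k" by (simp add: vec_eq_iff)
  thus ?case using 0 unfolding dint_def by blast
next
  case (Suc d)
  define c' where "c' = (\<chi> i. c$i + sgn (k$i - c$i))"
  have d1: "\<forall>i. \<bar>k$i - c'$i\<bar> \<le> int d"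
  proof
    fix i
    have "\<bar>k$i - c$i\<bar> \<le> int d + 1" using Suc.prems(3)[rule_format, of i] by simp
    thus "\<bar>k$i - c'$i\<bar> \<le> int d" unfolding c'_def by (auto simp: sgn_if abs_if)
  qed
  have "\<forall>i. \<bar>c'$i - c$i\<bar> \<le> int 1" unfolding c'_def by (auto simp: sgn_if)
  hence sub: "grid_cube eps c' \<subseteq> cube_ext eps 1 (grid_cube eps c)" using cube_sub_ext[OF e] by blast
  have gc: "grid_cube eps c' \<in> grid_cubes eps" unfolding grid_cubes_def by simp
  have mA: "grid_cube eps c' \<in> meeting_cubes eps A"
    using Suc.prems(1) sub gc unfolding interior_cube_def by blast
  show ?case
  proof (cases "interior_cube eps X A (grid_cube eps c')")
    case True
    then show ?thesis using Suc.IH[OF True Suc.prems(2) d1] Suc.prems(4) by simp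
  next
    case False
    hence b: "boundary_cube eps X A (grid_cube eps c')" using mA unfolding boundary_cube_def by blast
    hence "grid_cube eps c' \<subseteq> dbdry eps X A" unfolding dbdry_def by blast
    hence "grid_cube eps c' \<in> meeting_cubes eps (dbdry eps X A)"
      using gc cube_nonempty[OF e, of c'] unfolding meeting_cubes_def by blast
    moreover have "\<forall>i. \<bar>k$i - c'$i\<bar> \<le> int r" 
    proof
      fix i show "\<bar>k$i - c'$i\<bar> \<le> int r" using d1[rule_format, of i] Suc.prems(4) by linarith
    qed
    hence "x \<in> cube_ext eps r (grid_cube eps c')" using cube_sub_ext[OF e, of k c' r] Suc.prems(2) by blast
    ultimately show ?thesis unfolding next_ext_def by blast
  qed
qed

theorem lemma4p3:
  fixes X A :: "(real^'n::finite) set" and eps :: real and r :: nat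
  assumes "CARD('n) \<ge> 2" and "finite X" and "eps > 0" and "A \<subseteq> X"
  shows "next_ext eps r (dclos eps A) = dint eps X A \<union> next_ext eps r (dbdry eps X A)"
proof
  have e: "eps > 0" by fact
  show "next_ext eps r (dclos eps A) \<subseteq> dint eps X A \<union> next_ext eps r (dbdry eps X A)"
  proof
    fix x assume "x \<in> next_ext eps r (dclos eps A)"
    then obtain T where T: "T \<in> meeting_cubes eps (dclos eps A)" "x \<in> cube_ext eps r T"
      unfolding next_ext_def by blast
    then obtain j where j: "T = grid_cube eps j" unfolding meeting_cubes_def grid_cubes_def by blast
    obtain S where S: "S \<in> meeting_cubes eps A" "T \<inter> S \<noteq> {}"
      using T(1) unfolding meeting_cubes_def dclos_def by blast
    then obtain c where c: "S = grid_cube eps c" unfolding meeting_cubes_def grid_cubes_def by blast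
    have gT: "T \<in> grid_cubes eps" using j unfolding grid_cubes_def by simp
    show "x \<in> dint eps X A \<union> next_ext eps r (dbdry eps X A)"
    proof (cases "interior_cube eps X A S")
      case False
      hence "S \<subseteq> dbdry eps X A" using S(1) unfolding dbdry_def boundary_cube_def by blast
      hence "T \<in> meeting_cubes eps (dbdry eps X A)" using gT S(2) unfolding meeting_cubes_def by blast
      then show ?thesis using T(2) unfolding next_ext_def by blast
    next
      case Sint: True
      have "T \<subseteq> cube_ext eps 1 S" using adj[OF e, of j c] S(2) j c by blast
      hence mT: "T \<in> meeting_cubes eps A" using Sint gT unfolding interior_cube_def by blast
      show ?thesis
      proof (cases "interior_cube eps X A T")
        case False
        hence "T \<subseteq> dbdry eps X A" using mT unfolding dbdry_def boundary_cube_def by blast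
        hence "T \<in> meeting_cubes eps (dbdry eps X A)"
          using gT cube_nonempty[OF e, of j] j unfolding meeting_cubes_def by blast
        then show ?thesis using T(2) unfolding next_ext_def by blast
      next
        case True
        obtain k where k: "x \<in> grid_cube eps k" "\<forall>i. \<bar>k$i - j$i\<bar> \<le> int r"
          using ext_cube_index[OF e] T(2) j by blast
        show ?thesis using walk[OF e, of X A j x k r r] True j k by blast
      qed
    qed
  qed
  have sub: "dbdry eps X A \<subseteq> dclos eps A"
    unfolding dbdry_def dclos_def boundary_cube_def by blast
  have "dint eps X A \<subseteq> next_ext eps r (dclos eps A)"
  proof
    fix y assume "y \<in> dint eps X A"
    then obtain S where S: "interior_cube eps X A S" "y \<in> S" unfolding dint_def by blast
    hence mS: "S \<in> meeting_cubes eps A" unfolding interior_cube_def by blast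
    hence "S \<subseteq> dclos eps A" unfolding dclos_def by blast
    hence "S \<in> meeting_cubes eps (dclos eps A)" using mS S(2) unfolding meeting_cubes_def by blast
    moreover have "y \<in> cube_ext eps r S" using self_ext[OF e] S(2) by blast
    ultimately show "y \<in> next_ext eps r (dclos eps A)" unfolding next_ext_def by blast
  qed
  moreover have "next_ext eps r (dbdry eps X A) \<subseteq> next_ext eps r (dclos eps A)"
    using sub unfolding next_ext_def meeting_cubes_def by blast
  ultimately show "dint eps X A \<union> next_ext eps r (dbdry eps X A) \<subseteq> next_ext eps r (dclos eps A)"
    by blast
qed

end
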